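(* Let $\mu$ be a nonvanishing differentiable real function and $\omega^2$ a real function of $t$, and let $r(t)$ be the solution of $$\ddot r+\frac{\dot\mu(t)}{\mu(t)}\dot r+\omega^2(t) r=0,\qquad r(t_0)=r_0\neq 0,\quad \dot r(t_0)=0.$$ Define $$\rho(t)=\mu(t)\frac{\dot r(t)}{r(t)},\qquad \tau(t)=r^2(t_0)\int_{t_0}^{t}\frac{d\xi}{\mu(\xi)r^2(\xi)},\qquad g(t)=-\ln\!\left(\frac{r(t)}{r(t_0)}\right),$$ and the operator $$\hat W(t,t_0)=\exp\!\left(-\frac{\rho(t)}{2}x^2\right)\exp\!\left(g(t)\Big(x\frac{\partial}{\partial x}+\frac12\Big)\right)\exp\!\left(\frac{\tau(t)}{2}\frac{\partial^2}{\partial x^2}\right).$$ Then $\Phi(x,t)=\hat W(t,t_0)\Phi(x,t_0)$ is a formal solution of the initial value problem $$\frac{\partial\Phi}{\partial t}=\frac{1}{2\mu(t)}\frac{\partial^2\Phi}{\partial x^2}+\frac{\mu(t)\omega^2(t)}{2}x^2\Phi,\qquad \Phi(x,t)|_{t=t_0}=\Phi(x,t_0),\quad -\infty<x<\infty.$$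
   Context: Dots denote $t$-derivatives. The exponentials of operators are formal exponential operators (ordered product, Wei–Norman type representation); $g$ is allowed to be complex-valued. "Formal solution" means the operator $\hat W$ formally satisfies $\frac{d}{dt}\hat W=\big(\frac{1}{2\mu}\partial_x^2+\frac{\mu\omega^2}{2}x^2\big)\hat W$, $\hat W(t_0,t_0)=I$. *)

theory Defs
  imports "HOL-Analysis.Analysis" "HOL-Computational_Algebra.Polynomial"
begin

text \<open>The three formal exponential factors of W, acting on (real) polynomial
  initial data, where each of them is a well-defined (finite) operation.\<close>

definition exp_mult_x2 :: "real \<Rightarrow> (real \<Rightarrow> real) \<Rightarrow> (real \<Rightarrow> real)" where
  "exp_mult_x2 c f = (\<lambda>x. exp (c * x\<^sup>2) * f x)"

text \<open>exp(g (x d/dx + 1/2)): dilation operator.\<close>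
definition exp_dilation :: "real \<Rightarrow> (real \<Rightarrow> real) \<Rightarrow> (real \<Rightarrow> real)" where
  "exp_dilation g f = (\<lambda>x. exp (g / 2) * f (exp g * x))"

definition exp_d2 :: "real \<Rightarrow> real poly \<Rightarrow> (real \<Rightarrow> real)" where
  "exp_d2 s p = (\<lambda>x. \<Sum>k\<le>degree p. s ^ k / fact k * poly ((pderiv ^^ (2 * k)) p) x)"

definition W_op :: "real \<Rightarrow> real \<Rightarrow> real \<Rightarrow> real poly \<Rightarrow> (real \<Rightarrow> real)" where
  "W_op \<rho> g \<tau> p = exp_mult_x2 (- \<rho> / 2) (exp_dilation g (exp_d2 (\<tau> / 2) p))"

definition oint :: "(real \<Rightarrow> real) \<Rightarrow> real \<Rightarrow> real \<Rightarrow> real" where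
  "oint f a b = (if a \<le> b then integral {a..b} f else - integral {b..a} f)"

end

theory Submission
  imports Defs
begin

definition Fm :: "real poly \<Rightarrow> nat \<Rightarrow> real \<Rightarrow> real \<Rightarrow> real" where
  "Fm p m s y = (\<Sum>k\<le>degree p. s ^ k / fact k * poly ((pderiv ^^ (2 * k + m)) p) y)"

lemma degree_pderiv_pow: "degree ((pderiv ^^ m) (p::real poly)) = degree p - m"
  by (induction m) (simp_all add: degree_pderiv)

lemma pderiv_pow_vanish:
  assumes "degree (p::real poly) < m" shows "(pderiv ^^ m) p = 0"
proof -
  obtain j where m: "m = Suc j" using assms by (cases m) auto
  have "degree ((pderiv ^^ j) p) = 0" using assms m by (simp add: degree_pderiv_pow)
  then show ?thesis using m by (simp add: pderiv_eq_0_iff)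
qed

lemma Fm_shift:
  "(\<Sum>k\<le>degree p. real k * s ^ (k - Suc 0) / fact k * poly ((pderiv ^^ (2 * k + m)) p) y)
   = Fm p (m+2) s y"
proof (cases "degree p")
  case 0
  then have "(pderiv ^^ (m+2)) p = 0" by (intro pderiv_pow_vanish) auto
  then show ?thesis using 0 by (simp add: Fm_def)
next
  case (Suc n)
  have z: "(pderiv ^^ (2 * Suc n + (m+2))) p = 0" using Suc by (intro pderiv_pow_vanish) auto
  have "(\<Sum>k\<le>degree p. real k * s ^ (k - Suc 0) / fact k * poly ((pderiv ^^ (2 * k + m)) p) y)
     = (\<Sum>k\<le>n. real (Suc k) * s ^ k / fact (Suc k) * poly ((pderiv ^^ (2 * Suc k + m)) p) y)"
    unfolding Suc sum.atMost_Suc_shift by simp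
  also have "\<dots> = (\<Sum>k\<le>n. s ^ k / fact k * poly ((pderiv ^^ (2 * k + (m+2))) p) y)"
  proof (intro sum.cong refl)
    fix k
    have "real (Suc k) * s ^ k / fact (Suc k) = s ^ k / fact k"
      by (simp only: fact_Suc of_nat_fact) simp
    moreover have "2 * Suc k + m = 2 * k + (m + 2)" by simp
    ultimately show "real (Suc k) * s ^ k / fact (Suc k) * poly ((pderiv ^^ (2 * Suc k + m)) p) y =
         s ^ k / fact k * poly ((pderiv ^^ (2 * k + (m + 2))) p) y" by simp
  qed
  also have "\<dots> = Fm p (m+2) s y"
    unfolding Fm_def Suc sum.atMost_Suc using z by simp
  finally show ?thesis .
qed

lemma Fm_deriv:
  assumes "(\<sigma> has_real_derivative \<sigma>') (at t)" "(\<psi> has_real_derivative \<psi>') (at t)"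
    and "D = Fm p (m+2) (\<sigma> t) (\<psi> t) * \<sigma>' + Fm p (Suc m) (\<sigma> t) (\<psi> t) * \<psi>'"
  shows "((\<lambda>u. Fm p m (\<sigma> u) (\<psi> u)) has_real_derivative D) (at t)"
proof -
  have "((\<lambda>u. Fm p m (\<sigma> u) (\<psi> u)) has_real_derivative
     (\<Sum>k\<le>degree p. (real k * \<sigma> t ^ (k - Suc 0) * \<sigma>' / fact k) * poly ((pderiv ^^ (2 * k + m)) p) (\<psi> t)
        + \<sigma> t ^ k / fact k * (poly ((pderiv ^^ (2 * k + Suc m)) p) (\<psi> t) * \<psi>'))) (at t)"
    unfolding Fm_def
  proof (rule DERIV_sum)
    fix k
    have a: "((\<lambda>u. \<sigma> u ^ k) has_real_derivative real k * \<sigma> t ^ (k - Suc 0) * \<sigma>') (at t)"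
      using DERIV_chain2[OF DERIV_pow assms(1)] by simp
    have b: "((\<lambda>u. poly ((pderiv ^^ (2 * k + m)) p) (\<psi> u)) has_real_derivative
               poly ((pderiv ^^ (2 * k + Suc m)) p) (\<psi> t) * \<psi>') (at t)"
      using DERIV_chain2[OF poly_DERIV assms(2)] by simp
    show "((\<lambda>u. \<sigma> u ^ k / fact k * poly ((pderiv ^^ (2 * k + m)) p) (\<psi> u)) has_real_derivative
       (real k * \<sigma> t ^ (k - Suc 0) * \<sigma>' / fact k) * poly ((pderiv ^^ (2 * k + m)) p) (\<psi> t)
        + \<sigma> t ^ k / fact k * (poly ((pderiv ^^ (2 * k + Suc m)) p) (\<psi> t) * \<psi>')) (at t)"
      by (rule derivative_eq_intros a b refl | simp)+
  qed
  moreover have "(\<Sum>k\<le>degree p. (real k * \<sigma> t ^ (k - Suc 0) * \<sigma>' / fact k) * poly ((pderiv ^^ (2 * k + m)) p) (\<psi> t)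
        + \<sigma> t ^ k / fact k * (poly ((pderiv ^^ (2 * k + Suc m)) p) (\<psi> t) * \<psi>')) = D"
    unfolding assms(3) Fm_shift[symmetric] 
    unfolding sum.distrib Fm_def sum_distrib_right
    by (intro arg_cong2[where f="(+)"] sum.cong refl) auto
  ultimately show ?thesis by simp
qed

lemma W_eq: "W_op R G T p x = exp (- R / 2 * x\<^sup>2) * (exp (G / 2) * Fm p 0 (T / 2) (exp G * x))"
  by (simp add: W_op_def exp_mult_x2_def exp_dilation_def exp_d2_def Fm_def)

lemma same_sign:
  fixes r :: "real \<Rightarrow> real"
  assumes I: "is_interval I" and a: "a \<in> I" and b: "b \<in> I" and ab: "a \<le> b"
    and c: "continuous_on I r" and nz: "\<And>t. t \<in> I \<Longrightarrow> r t \<noteq> 0"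
  shows "r a * r b > 0"
proof (rule ccontr)
  assume "\<not> r a * r b > 0"
  moreover have "r a \<noteq> 0" "r b \<noteq> 0" using nz a b by auto
  ultimately have sg: "(r a < 0 \<and> 0 < r b) \<or> (r b < 0 \<and> 0 < r a)"
    by (metis linorder_neqE_linordered_idom mult_neg_neg mult_pos_pos)
  have sub: "{a..b} \<subseteq> I"
  proof
    fix z assume "z \<in> {a..b}"
    then show "z \<in> I" using I a b unfolding is_interval_1 by (meson atLeastAtMost_iff)
  qed
  have cab: "continuous_on {a..b} r" using continuous_on_subset[OF c sub] .
  obtain z where "a \<le> z" "z \<le> b" "r z = 0"
    using sg
  proof
    assume "r a < 0 \<and> 0 < r b"
    then show ?thesis using IVT'[of r a 0 b, OF _ _ ab cab] that by force
  next
    assume h: "r b < 0 \<and> 0 < r a"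
    have "\<exists>x. a \<le> x \<and> x \<le> b \<and> r x = 0"
      by (rule IVT2'[of r b 0 a, OF _ _ ab cab]) (use h in auto)
    then show ?thesis using that by blast
  qed
  then show False using nz sub by auto
qed

lemma oint_deriv:
  fixes f :: "real \<Rightarrow> real"
  assumes I: "is_interval I" "open I" "t0 \<in> I" and c: "continuous_on I f" and t: "t \<in> I"
  shows "((\<lambda>s. oint f t0 s) has_real_derivative f t) (at t)"
proof -
  obtain e1 where e1: "e1 > 0" "ball t e1 \<subseteq> I" using I(2) t open_contains_ball by blast
  obtain e2 where e2: "e2 > 0" "ball t0 e2 \<subseteq> I" using I(2) I(3) open_contains_ball by blast
  define e where "e = min e1 e2"
  define a where "a = min t0 t - e/2"
  define b where "b = max t0 t + e/2"
  have ep: "e > 0" using e1 e2 by (simp add: e_def)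
  have aI: "a \<in> I"
  proof (cases "t0 \<le> t")
    case True then have "a \<in> ball t0 e2" using ep by (auto simp: a_def e_def dist_real_def)
    then show ?thesis using e2 by auto
  next
    case False then have "a \<in> ball t e1" using ep by (auto simp: a_def e_def dist_real_def)
    then show ?thesis using e1 by auto
  qed
  have bI: "b \<in> I"
  proof (cases "t0 \<le> t")
    case True then have "b \<in> ball t e1" using ep by (auto simp: b_def e_def dist_real_def)
    then show ?thesis using e1 by auto
  next
    case False then have "b \<in> ball t0 e2" using ep by (auto simp: b_def e_def dist_real_def)
    then show ?thesis using e2 by auto
  qed
  have sub: "{a..b} \<subseteq> I"
  proof
    fix z assume "z \<in> {a..b}"
    then show "z \<in> I" using I(1) aI bI unfolding is_interval_1 by (meson atLeastAtMost_iff)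
  qed
  have cab: "continuous_on {a..b} f" using continuous_on_subset[OF c sub] .
  have int: "f integrable_on {a..b}" using integrable_continuous_real[OF cab] .
  have ta: "a < t" "t < b" "a < t0" "t0 < b" using ep by (auto simp: a_def b_def)
  have eq: "oint f t0 s = integral {a..s} f - integral {a..t0} f" if s: "s \<in> {a<..<b}" for s
  proof (cases "t0 \<le> s")
    case True
    have "integral {a..t0} f + integral {t0..s} f = integral {a..s} f"
      using True ta s by (intro Henstock_Kurzweil_Integration.integral_combine[where a=a and c=t0 and b=s and f=f] integrable_subinterval_real[OF int]) auto
    then show ?thesis using True by (simp add: oint_def)
  next
    case False
    have "integral {a..s} f + integral {s..t0} f = integral {a..t0} f"
      using False ta s by (intro Henstock_Kurzweil_Integration.integral_combine[where a=a and c=s and b=t0 and f=f] integrable_subinterval_real[OF int]) auto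
    then show ?thesis using False by (simp add: oint_def)
  qed
  have d: "((\<lambda>s. integral {a..s} f) has_real_derivative f t) (at t within {a..b})"
    using integral_has_real_derivative[OF cab] ta by auto
  have d2: "((\<lambda>s. integral {a..s} f) has_real_derivative f t) (at t)"
  proof -
    have "((\<lambda>s. integral {a..s} f) has_real_derivative f t) (at t within {a<..<b})"
      by (rule DERIV_subset[OF d]) auto
    then show ?thesis using at_within_open[of t "{a<..<b}"] ta by auto
  qed
  have d3: "((\<lambda>s. integral {a..s} f - integral {a..t0} f) has_real_derivative f t) (at t)"
    using DERIV_diff[OF d2 DERIV_const] by simp
  show ?thesis
    by (rule has_field_derivative_transform_within_open[OF d3, of "{a<..<b}"])
       (use ta eq in auto)
qed

theorem proposition2:
  fixes \<mu> \<mu>' \<omega>2 r r' r'' :: "real \<Rightarrow> real" and I :: "real set" and t0 :: real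
    and p :: "real poly"
  assumes I: "is_interval I" "open I" "t0 \<in> I"
    and mu_der: "\<And>t. t \<in> I \<Longrightarrow> (\<mu> has_real_derivative \<mu>' t) (at t)"
    and mu_nz: "\<And>t. t \<in> I \<Longrightarrow> \<mu> t \<noteq> 0"
    and r_der: "\<And>t. t \<in> I \<Longrightarrow> (r has_real_derivative r' t) (at t)"
    and r'_der: "\<And>t. t \<in> I \<Longrightarrow> (r' has_real_derivative r'' t) (at t)"
    and ode: "\<And>t. t \<in> I \<Longrightarrow> r'' t + \<mu>' t / \<mu> t * r' t + \<omega>2 t * r t = 0"
    and init: "r t0 \<noteq> 0" "r' t0 = 0"
    and r_nz: "\<And>t. t \<in> I \<Longrightarrow> r t \<noteq> 0"
  defines "\<rho> \<equiv> (\<lambda>t. \<mu> t * r' t / r t)"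
    and "\<tau> \<equiv> (\<lambda>t. (r t0)\<^sup>2 * oint (\<lambda>\<xi>. 1 / (\<mu> \<xi> * (r \<xi>)\<^sup>2)) t0 t)"
    and "g \<equiv> (\<lambda>t. - ln (r t / r t0))"
  shows "let \<Phi> = (\<lambda>x t. W_op (\<rho> t) (g t) (\<tau> t) p x) in
         (\<forall>x. \<Phi> x t0 = poly p x) \<and>
         (\<forall>t\<in>I. \<forall>x.
            ((\<lambda>s. \<Phi> x s) has_real_derivative
               (1 / (2 * \<mu> t) * deriv (deriv (\<lambda>y. \<Phi> y t)) x
                + \<mu> t * \<omega>2 t / 2 * x\<^sup>2 * \<Phi> x t)) (at t))"
proof -
  have contr: "continuous_on I r"
    using r_der by (meson DERIV_isCont continuous_at_imp_continuous_on)
  have contmu: "continuous_on I \<mu>"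
    using mu_der by (meson DERIV_isCont continuous_at_imp_continuous_on)
  define f where "f = (\<lambda>\<xi>. 1 / (\<mu> \<xi> * (r \<xi>)\<^sup>2))"
  have contf: "continuous_on I f"
    unfolding f_def using mu_nz r_nz
    by (intro continuous_intros contr contmu) auto
  have pos: "r t / r t0 > 0" if t: "t \<in> I" for t
  proof -
    have "r t * r t0 > 0"
    proof (cases "t \<le> t0")
      case True then show ?thesis using same_sign[OF I(1) t I(3) True contr r_nz] by simp
    next
      case False then show ?thesis using same_sign[OF I(1) I(3) t _ contr r_nz] by (simp add: mult.commute)
    qed
    then show ?thesis by (simp add: zero_less_divide_iff zero_less_mult_iff)
  qed
  show ?thesis unfolding Let_def
  proof (intro conjI ballI allI)
    fix x
    have "\<rho> t0 = 0" using init by (simp add: \<rho>_def)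
    moreover have "g t0 = 0" using init by (simp add: g_def)
    moreover have "\<tau> t0 = 0" by (simp add: \<tau>_def oint_def)
    ultimately show "W_op (\<rho> t0) (g t0) (\<tau> t0) p x = poly p x"
      by (simp add: W_eq Fm_def sum.atMost_shift)
  next
    fix t x assume t: "t \<in> I"
    have mt: "\<mu> t \<noteq> 0" and rt: "r t \<noteq> 0" using mu_nz r_nz t by auto
    define R where "R = \<rho> t"
    define a where "a = exp (g t)"
    define c where "c = exp (g t / 2)"
    define s where "s = \<tau> t / 2"
    have a_eq: "a = r t0 / r t"
      using pos[OF t] init by (simp add: a_def g_def exp_minus exp_ln)
    have hrho: "(\<rho> has_real_derivative (- \<mu> t * \<omega>2 t - R\<^sup>2 / \<mu> t)) (at t)"
    proof -
      have "(\<rho> has_real_derivative ((\<mu>' t * r' t + \<mu> t * r'' t) * r t - \<mu> t * r' t * r' t) / (r t)\<^sup>2) (at t)"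
        unfolding \<rho>_def
        by (rule derivative_eq_intros mu_der[OF t] r_der[OF t] r'_der[OF t] refl | use rt in simp)+
           (simp add: field_simps power2_eq_square)
      moreover have "r'' t = - \<mu>' t / \<mu> t * r' t - \<omega>2 t * r t" using ode[OF t] by simp
      ultimately show ?thesis using mt rt
        by (simp add: R_def \<rho>_def field_simps power2_eq_square)
    qed
    have hg: "(g has_real_derivative (- R / \<mu> t)) (at t)"
    proof -
      have "(g has_real_derivative - (r' t / r t0 / (r t / r t0))) (at t)"
        unfolding g_def
        by (rule derivative_eq_intros r_der[OF t] refl | use pos[OF t] init in simp)+
      then show ?thesis using mt rt init by (simp add: R_def \<rho>_def field_simps)
    qed
    have htau: "(\<tau> has_real_derivative a\<^sup>2 / \<mu> t) (at t)"
    proof -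
      have "((\<lambda>s. (r t0)\<^sup>2 * oint f t0 s) has_real_derivative (r t0)\<^sup>2 * f t) (at t)"
        by (rule DERIV_cmult oint_deriv[OF I contf t])+
      then show ?thesis using mt rt unfolding \<tau>_def f_def a_eq
        by (simp add: field_simps power2_eq_square)
    qed
    define \<Phi> where "\<Phi> = (\<lambda>y. exp (- R / 2 * y\<^sup>2) * (c * Fm p 0 s (a * y)))"
    define \<Phi>y where "\<Phi>y = (\<lambda>y. exp (- R / 2 * y\<^sup>2) * c * (a * Fm p 1 s (a * y) - R * y * Fm p 0 s (a * y)))"
    define \<Phi>yy where "\<Phi>yy = (\<lambda>y. exp (- R / 2 * y\<^sup>2) * c * (a\<^sup>2 * Fm p 2 s (a * y)
        - 2 * R * y * a * Fm p 1 s (a * y) + (R\<^sup>2 * y\<^sup>2 - R) * Fm p 0 s (a * y)))"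
    have WP: "(\<lambda>y. W_op (\<rho> t) (g t) (\<tau> t) p y) = \<Phi>"
      by (simp add: fun_eq_iff W_eq \<Phi>_def R_def a_def c_def s_def)
    have d1: "(\<Phi> has_real_derivative \<Phi>y y) (at y)" for y
      unfolding \<Phi>_def
      by (rule derivative_eq_intros Fm_deriv refl | simp)+ (simp add: \<Phi>y_def algebra_simps)
    have d2: "(\<Phi>y has_real_derivative \<Phi>yy y) (at y)" for y
      unfolding \<Phi>y_def
      by (rule derivative_eq_intros Fm_deriv refl | simp)+ (simp add: \<Phi>yy_def algebra_simps power2_eq_square numeral_2_eq_2)
    have dd: "deriv (deriv \<Phi>) x = \<Phi>yy x"
    proof -
      have "deriv \<Phi> = \<Phi>y" using d1 by (simp add: fun_eq_iff DERIV_imp_deriv)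
      then show ?thesis using d2 by (simp add: DERIV_imp_deriv)
    qed
    have dt: "((\<lambda>s. W_op (\<rho> s) (g s) (\<tau> s) p x) has_real_derivative
       exp (- R / 2 * x\<^sup>2) * (- (- \<mu> t * \<omega>2 t - R\<^sup>2 / \<mu> t) / 2 * x\<^sup>2) * (c * Fm p 0 s (a * x))
       + exp (- R / 2 * x\<^sup>2) * (c * (- R / \<mu> t / 2) * Fm p 0 s (a * x)
          + c * (Fm p 2 s (a * x) * (a\<^sup>2 / \<mu> t / 2) + Fm p 1 s (a * x) * (a * (- R / \<mu> t) * x)))) (at t)"
      unfolding W_eq
      by (rule derivative_eq_intros Fm_deriv hrho hg htau refl | simp)+
         (simp add: R_def a_def c_def s_def algebra_simps numeral_2_eq_2)
    show "((\<lambda>s. W_op (\<rho> s) (g s) (\<tau> s) p x) has_real_derivative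
        1 / (2 * \<mu> t) * deriv (deriv (\<lambda>y. W_op (\<rho> t) (g t) (\<tau> t) p y)) x +
        \<mu> t * \<omega>2 t / 2 * x\<^sup>2 * W_op (\<rho> t) (g t) (\<tau> t) p x) (at t)"
      unfolding WP dd
    proof (rule DERIV_cong[OF dt])
      show "exp (- R / 2 * x\<^sup>2) * (- (- \<mu> t * \<omega>2 t - R\<^sup>2 / \<mu> t) / 2 * x\<^sup>2) * (c * Fm p 0 s (a * x))
       + exp (- R / 2 * x\<^sup>2) * (c * (- R / \<mu> t / 2) * Fm p 0 s (a * x)
          + c * (Fm p 2 s (a * x) * (a\<^sup>2 / \<mu> t / 2) + Fm p 1 s (a * x) * (a * (- R / \<mu> t) * x)))
        = 1 / (2 * \<mu> t) * \<Phi>yy x + \<mu> t * \<omega>2 t / 2 * x\<^sup>2 * \<Phi> x"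
        using mt by (simp add: \<Phi>yy_def \<Phi>_def field_simps power2_eq_square)
    qed
  qed
qed

end
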